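(* Let $(\mathcal{G},\alpha)$ be an abstract GKM graph with vertex set $\mathcal{V}$. Call a subset $F\subseteq H_T^*(\mathcal{G})\setminus\{0\}$ with $fg=0$ for all distinct $f,g\in F$ and $|F|=|\mathcal{V}|$ a maximal collection. Then: (a) $\{\tau_p: p\in\mathcal{V}\}$ is a maximal collection; (b) every maximal collection is of the form $\{c_p\tau_p: p\in\mathcal{V}\}$ with $c_p\in H^*(BT)$; (c) these properties characterize $\{\tau_p\}_{p\in\mathcal{V}}$ up to signs: if $\{g_p\}_{p\in\mathcal{V}}$ is a maximal collection such that every maximal collection is obtained from it by multiplying each $g_p$ by an element of $H^*(BT)$, then $g_p=\pm\tau_p$ for every $p$ (after suitable indexing).
   Context: $H^*(BT)=\mathbb{Z}[x_1,\dots,x_r]$ with $\deg x_i=2$. Let $\mathcal{G}$ be a finite $n$-valent undirected graph (multiple edges allowed, no loops) with vertex set $\mathcal{V}$ and set of directed edges $\mathcal{E}$; for $e\in\mathcal{E}$, $\overline e$ is the reversed edge, $i(e),t(e)$ its initial and terminal vertices, and $\mathcal{E}_p=\{e: i(e)=p\}$. An axial function $\alpha:\mathcal{E}\to H^2(BT)$ satisfies: $\alpha(\overline e)=\pm\alpha(e)$; $\alpha(e),\alpha(e')$ linearly independent over $\mathbb{Z}$ if $e\ne e'$, $i(e)=i(e')$; coefficients of each $\alpha(e)$ have gcd $1$. An abstract GKM graph is such $(\mathcal{G},\alpha)$ admitting a parallel transport, i.e. bijections $\mathcal{P}_e:\mathcal{E}_{i(e)}\to\mathcal{E}_{t(e)}$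 with $\mathcal{P}_{\overline e}=\mathcal{P}_e^{-1}$, $\mathcal{P}_e(e)=\overline e$, $\alpha(\mathcal{P}_e(e'))-\alpha(e')\in\mathbb{Z}\alpha(e)$. Its graph equivariant cohomology is $H_T^*(\mathcal{G})=\{f:\mathcal{V}\to H^*(BT)\ :\ \alpha(e)\mid f(i(e))-f(t(e))\ \forall e\in\mathcal{E}\}$ with pointwise operations. The equivariant Thom class of $p\in\mathcal{V}$ is $\tau_p:\mathcal{V}\to H^*(BT)$, $\tau_p(p)=\prod_{e\in\mathcal{E}_p}\alpha(e)$, $\tau_p(q)=0$ for $q\ne p$; it lies in $H_T^{2n}(\mathcal{G})$. *)

theory Defs
  imports Main "HOL-Library.Poly_Mapping"
begin

text \<open>H^*(BT) = Z[x_0,...,x_{r-1}], realised inside the polynomial ring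
  (nat =>0 nat) =>0 int (monomials = finitely supported exponent vectors).\<close>

type_synonym ipoly = "(nat \<Rightarrow>\<^sub>0 nat) \<Rightarrow>\<^sub>0 int"

definition HBT :: "nat \<Rightarrow> ipoly set" where
  "HBT r = {a. \<forall>m\<in>Poly_Mapping.keys a. Poly_Mapping.keys m \<subseteq> {..<r}}"

definition HBT2 :: "nat \<Rightarrow> ipoly set" where
  "HBT2 r = {a \<in> HBT r. \<forall>m\<in>Poly_Mapping.keys a. (\<Sum>j\<in>Poly_Mapping.keys m. Poly_Mapping.lookup m j) = 1}"

definition Z_lin_indep :: "ipoly \<Rightarrow> ipoly \<Rightarrow> bool" where
  "Z_lin_indep a b \<longleftrightarrow> (\<forall>c d :: int. of_int c * a + of_int d * b = 0 \<longrightarrow> c = 0 \<and> d = 0)"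

definition coeff_gcd_one :: "ipoly \<Rightarrow> bool" where
  "coeff_gcd_one a \<longleftrightarrow> Gcd (Poly_Mapping.lookup a ` Poly_Mapping.keys a) = 1"

definition out_edges :: "'e set \<Rightarrow> ('e \<Rightarrow> 'v) \<Rightarrow> 'v \<Rightarrow> 'e set" where
  "out_edges E i p = {e \<in> E. i e = p}"

text \<open>Finite n-valent graph (multiple edges allowed, no loops), given by the set V of
  vertices, the set E of directed edges, initial/terminal maps i,t and reversal rv.\<close>
definition nvalent_graph ::
  "nat \<Rightarrow> 'v set \<Rightarrow> 'e set \<Rightarrow> ('e \<Rightarrow> 'v) \<Rightarrow> ('e \<Rightarrow> 'v) \<Rightarrow> ('e \<Rightarrow> 'e) \<Rightarrow> bool" where
  "nvalent_graph n V E i t rv \<longleftrightarrow>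
     finite V \<and> finite E \<and>
     (\<forall>e\<in>E. i e \<in> V \<and> t e \<in> V \<and> i e \<noteq> t e \<and>
             rv e \<in> E \<and> rv e \<noteq> e \<and> rv (rv e) = e \<and> i (rv e) = t e \<and> t (rv e) = i e) \<and>
     (\<forall>p\<in>V. card (out_edges E i p) = n)"

definition axial_function ::
  "nat \<Rightarrow> 'v set \<Rightarrow> 'e set \<Rightarrow> ('e \<Rightarrow> 'v) \<Rightarrow> ('e \<Rightarrow> 'e) \<Rightarrow> ('e \<Rightarrow> ipoly) \<Rightarrow> bool" where
  "axial_function r V E i rv \<alpha> \<longleftrightarrow>
     (\<forall>e\<in>E. \<alpha> e \<in> HBT2 r \<and> coeff_gcd_one (\<alpha> e) \<and> (\<alpha> (rv e) = \<alpha> e \<or> \<alpha> (rv e) = - \<alpha> e)) \<and>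
     (\<forall>e\<in>E. \<forall>e'\<in>E. e \<noteq> e' \<and> i e = i e' \<longrightarrow> Z_lin_indep (\<alpha> e) (\<alpha> e'))"

definition parallel_transport ::
  "'e set \<Rightarrow> ('e \<Rightarrow> 'v) \<Rightarrow> ('e \<Rightarrow> 'v) \<Rightarrow> ('e \<Rightarrow> 'e) \<Rightarrow> ('e \<Rightarrow> ipoly) \<Rightarrow> ('e \<Rightarrow> 'e \<Rightarrow> 'e) \<Rightarrow> bool" where
  "parallel_transport E i t rv \<alpha> P \<longleftrightarrow>
     (\<forall>e\<in>E. bij_betw (P e) (out_edges E i (i e)) (out_edges E i (t e)) \<and>
            (\<forall>e'\<in>out_edges E i (i e). P (rv e) (P e e') = e') \<and>
            P e e = rv e \<and>
            (\<forall>e'\<in>out_edges E i (i e). \<exists>k::int. \<alpha> (P e e') - \<alpha> e' = of_int k * \<alpha> e))"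

definition abstract_GKM_graph ::
  "nat \<Rightarrow> nat \<Rightarrow> 'v set \<Rightarrow> 'e set \<Rightarrow> ('e \<Rightarrow> 'v) \<Rightarrow> ('e \<Rightarrow> 'v) \<Rightarrow> ('e \<Rightarrow> 'e) \<Rightarrow> ('e \<Rightarrow> ipoly) \<Rightarrow> bool" where
  "abstract_GKM_graph r n V E i t rv \<alpha> \<longleftrightarrow>
     nvalent_graph n V E i t rv \<and> axial_function r V E i rv \<alpha> \<and>
     (\<exists>P. parallel_transport E i t rv \<alpha> P)"

text \<open>Graph equivariant cohomology: functions V -> H^*(BT) (extended by 0 outside V).\<close>
definition graph_cohomology ::
  "nat \<Rightarrow> 'v set \<Rightarrow> 'e set \<Rightarrow> ('e \<Rightarrow> 'v) \<Rightarrow> ('e \<Rightarrow> 'v) \<Rightarrow> ('e \<Rightarrow> ipoly) \<Rightarrow> ('v \<Rightarrow> ipoly) set" where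
  "graph_cohomology r V E i t \<alpha> =
     {f. (\<forall>q\<in>V. f q \<in> HBT r) \<and> (\<forall>q. q \<notin> V \<longrightarrow> f q = 0) \<and>
         (\<forall>e\<in>E. \<alpha> e dvd f (i e) - f (t e))}"

definition thom_class :: "'e set \<Rightarrow> ('e \<Rightarrow> 'v) \<Rightarrow> ('e \<Rightarrow> ipoly) \<Rightarrow> 'v \<Rightarrow> 'v \<Rightarrow> ipoly" where
  "thom_class E i \<alpha> p = (\<lambda>q. if q = p then (\<Prod>e\<in>out_edges E i p. \<alpha> e) else 0)"

definition maximal_collection ::
  "nat \<Rightarrow> 'v set \<Rightarrow> 'e set \<Rightarrow> ('e \<Rightarrow> 'v) \<Rightarrow> ('e \<Rightarrow> 'v) \<Rightarrow> ('e \<Rightarrow> ipoly) \<Rightarrow> ('v \<Rightarrow> ipoly) set \<Rightarrow> bool" where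
  "maximal_collection r V E i t \<alpha> F \<longleftrightarrow>
     F \<subseteq> graph_cohomology r V E i t \<alpha> - {(\<lambda>q. 0)} \<and>
     (\<forall>f\<in>F. \<forall>g\<in>F. f \<noteq> g \<longrightarrow> (\<lambda>q. f q * g q) = (\<lambda>q. 0)) \<and>
     finite F \<and> card F = card V"

end

theory Submission
  imports Defs
begin


abbreviation Xv :: "nat \<Rightarrow> ipoly" where "Xv l \<equiv> frag_of (Poly_Mapping.single l 1)"

definition monoev :: "(nat \<Rightarrow> ipoly) \<Rightarrow> (nat \<Rightarrow>\<^sub>0 nat) \<Rightarrow> ipoly" where
  "monoev \<sigma> m = (\<Prod>l\<in>Poly_Mapping.keys m. \<sigma> l ^ Poly_Mapping.lookup m l)"

definition subst :: "(nat \<Rightarrow> ipoly) \<Rightarrow> ipoly \<Rightarrow> ipoly" where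
  "subst \<sigma> = frag_extend (monoev \<sigma>)"

lemma mono_superset:
  assumes "finite S" "Poly_Mapping.keys m \<subseteq> S"
  shows "monoev \<sigma> m = (\<Prod>l\<in>S. \<sigma> l ^ Poly_Mapping.lookup m l)"
  unfolding monoev_def
  by (rule prod.mono_neutral_cong_left) (use assms in \<open>auto simp: in_keys_iff\<close>)

lemma mono_add: "monoev \<sigma> (m + m') = monoev \<sigma> m * monoev \<sigma> m'"
proof -
  let ?S = "Poly_Mapping.keys m \<union> Poly_Mapping.keys m'"
  have f: "finite ?S" by simp
  have "monoev \<sigma> (m + m') = (\<Prod>l\<in>?S. \<sigma> l ^ Poly_Mapping.lookup (m+m') l)"
    by (rule mono_superset[OF f]) (use keys_add[of m m'] in auto)
  also have "\<dots> = (\<Prod>l\<in>?S. \<sigma> l ^ Poly_Mapping.lookup m l * \<sigma> l ^ Poly_Mapping.lookup m' l)"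
    by (simp add: lookup_add power_add)
  also have "\<dots> = monoev \<sigma> m * monoev \<sigma> m'"
    by (simp add: prod.distrib mono_superset[OF f])
  finally show ?thesis .
qed

lemma mono_zero [simp]: "monoev \<sigma> 0 = 1"
  by (simp add: monoev_def)

lemma subst_frag_of [simp]: "subst \<sigma> (frag_of m) = monoev \<sigma> m"
  by (simp add: subst_def)

lemma subst_add: "subst \<sigma> (a + b) = subst \<sigma> a + subst \<sigma> b"
  by (simp add: subst_def frag_extend_add)
lemma subst_diff: "subst \<sigma> (a - b) = subst \<sigma> a - subst \<sigma> b"
  by (simp add: subst_def frag_extend_diff)
lemma subst_minus: "subst \<sigma> (- a) = - subst \<sigma> a"
  by (simp add: subst_def frag_extend_minus)
lemma subst_zero [simp]: "subst \<sigma> 0 = 0"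
  by (simp add: subst_def)
lemma subst_cmul: "subst \<sigma> (frag_cmul c a) = frag_cmul c (subst \<sigma> a)"
  by (simp add: subst_def frag_extend_cmul)

lemma frag_of_mult: "frag_of m * frag_of m' = frag_of (m + m')"
  by (simp add: mult_single)

lemma subst_mult: "subst \<sigma> (p * q) = subst \<sigma> p * subst \<sigma> q"
proof -
  have "subst \<sigma> (frag_of m * q) = monoev \<sigma> m * subst \<sigma> q" for m
  proof -
    have "Poly_Mapping.keys q \<subseteq> UNIV" by simp
    then show ?thesis
    proof (induction q rule: frag_induction)
      case zero then show ?case by simp
    next
      case (one x) then show ?case by (simp add: frag_of_mult mono_add)
    next
      case (diff a b) then show ?case by (simp add: right_diff_distrib subst_diff)
    qed
  qed
  note H = this
  have "Poly_Mapping.keys p \<subseteq> UNIV" by simp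
  then show ?thesis
  proof (induction p rule: frag_induction)
    case zero then show ?case by simp
  next
    case (one x) then show ?case by (simp add: H)
  next
    case (diff a b) then show ?case by (simp add: left_diff_distrib subst_diff)
  qed
qed

lemma subst_one [simp]: "subst \<sigma> 1 = 1"
  by (metis mono_zero single_one subst_frag_of)

lemma subst_power: "subst \<sigma> (p ^ k) = subst \<sigma> p ^ k"
  by (induction k) (simp_all add: subst_mult)

lemma subst_prod: "subst \<sigma> (\<Prod>l\<in>S. f l) = (\<Prod>l\<in>S. subst \<sigma> (f l))"
  by (induction S rule: infinite_finite_induct) (simp_all add: subst_mult)

lemma subst_subst: "subst \<tau> (subst \<sigma> p) = subst (\<lambda>l. subst \<tau> (\<sigma> l)) p"
proof -
  have "Poly_Mapping.keys p \<subseteq> UNIV" by simp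
  then show ?thesis
  proof (induction p rule: frag_induction)
    case (one x) then show ?case by (simp add: monoev_def subst_prod subst_power)
  qed (simp_all add: subst_diff)
qed

lemma frag_of_pow: "frag_of (Poly_Mapping.single l (1::nat)) ^ k = frag_of (Poly_Mapping.single l k)"
proof (induction k)
  case 0 then show ?case by simp
next
  case (Suc k)
  have "Poly_Mapping.single l (Suc k) = Poly_Mapping.single l 1 + Poly_Mapping.single l k"
    by (simp add: single_add[symmetric])
  then show ?case using Suc by (simp add: frag_of_mult)
qed

lemma prod_frag_of: "(\<Prod>l\<in>S. frag_of (g l)) = frag_of (\<Sum>l\<in>S. g l)"
  by (induction S rule: infinite_finite_induct) (simp_all add: frag_of_mult)

lemma sum_single_keys: "(\<Sum>l\<in>Poly_Mapping.keys m. Poly_Mapping.single l (Poly_Mapping.lookup m l)) = (m :: nat \<Rightarrow>\<^sub>0 nat)"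
proof (rule poly_mapping_eqI)
  fix k
  have "(\<Sum>l\<in>Poly_Mapping.keys m. Poly_Mapping.lookup (Poly_Mapping.single l (Poly_Mapping.lookup m l)) k)
      = (\<Sum>l\<in>Poly_Mapping.keys m. if l = k then Poly_Mapping.lookup m k else 0)"
    by (rule sum.cong) (auto simp: lookup_single when_def)
  also have "\<dots> = Poly_Mapping.lookup m k" by (simp add: in_keys_iff)
  finally show "Poly_Mapping.lookup (\<Sum>l\<in>Poly_Mapping.keys m. Poly_Mapping.single l (Poly_Mapping.lookup m l)) k = Poly_Mapping.lookup m k"
    by (simp add: lookup_sum)
qed

lemma mono_X: "monoev Xv m = frag_of m"
  by (simp only: monoev_def frag_of_pow prod_frag_of sum_single_keys)

lemma subst_X: "subst Xv p = p"
  by (metis (no_types, lifting) frag_expansion frag_extend_eq mono_X subst_def)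

lemma subst_cong: "(\<And>l. \<sigma> l = \<tau> l) \<Longrightarrow> subst \<sigma> p = subst \<tau> p"
  by (metis ext)

lemma mono_single1 [simp]: "monoev \<sigma> (Poly_Mapping.single l 1) = \<sigma> l"
  by (simp add: monoev_def)



section \<open>Evaluation at a variable\<close>

definition kill :: "nat \<Rightarrow> nat \<Rightarrow> ipoly" where
  "kill k = (\<lambda>l. if l = k then 0 else Xv l)"

lemma split_var:
  assumes "Poly_Mapping.lookup m k \<noteq> 0"
  shows "frag_of m = Xv k * frag_of (m - Poly_Mapping.single k 1)"
proof -
  have "m = Poly_Mapping.single k 1 + (m - Poly_Mapping.single k 1)"
    by (rule poly_mapping_eqI) (use assms in \<open>auto simp: lookup_add lookup_minus lookup_single when_def\<close>)
  then show ?thesis by (metis frag_of_mult)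
qed

lemma monoev_kill_zero:
  assumes "Poly_Mapping.lookup m k \<noteq> 0"
  shows "monoev (kill k) m = 0"
proof -
  have "k \<in> Poly_Mapping.keys m" using assms by (simp add: in_keys_iff)
  then show ?thesis using assms unfolding monoev_def
    by (auto simp: kill_def prod_zero_iff intro!: bexI[of _ k])
qed

lemma monoev_kill_id:
  assumes "Poly_Mapping.lookup m k = 0"
  shows "monoev (kill k) m = frag_of m"
proof -
  have "monoev (kill k) m = monoev Xv m"
    unfolding monoev_def by (rule prod.cong) (use assms in \<open>auto simp: kill_def in_keys_iff\<close>)
  then show ?thesis using mono_X[of m] by simp
qed

lemma Xv_dvd_iff: "Xv k dvd f \<longleftrightarrow> subst (kill k) f = 0"
proof
  assume "Xv k dvd f"
  then obtain h where "f = Xv k * h" by (auto simp: dvd_def)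
  then show "subst (kill k) f = 0" using mono_single1[of "kill k" k] by (simp add: subst_mult kill_def)
next
  assume z: "subst (kill k) f = 0"
  have "Poly_Mapping.keys f \<subseteq> {m. Poly_Mapping.lookup m k = 0} \<union> {m. Poly_Mapping.lookup m k \<noteq> 0}"
    by auto
  then obtain d e where d: "Poly_Mapping.keys d \<subseteq> {m. Poly_Mapping.lookup m k = 0}"
    and e: "Poly_Mapping.keys e \<subseteq> {m. Poly_Mapping.lookup m k \<noteq> 0}" and de: "d + e = f"
    by (rule frag_split)
  from d have sd: "subst (kill k) d = d"
    by (induction d rule: frag_induction) (simp_all add: monoev_kill_id subst_diff)
  from e have se: "subst (kill k) e = 0"
    by (induction e rule: frag_induction) (simp_all add: monoev_kill_zero subst_diff)
  from e have ve: "Xv k dvd e"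
  proof (induction e rule: frag_induction)
    case (one x) then show ?case using split_var[of x k] by simp
  qed (simp_all add: dvd_diff)
  have "d = 0" using z sd se de by (metis add.right_neutral subst_add)
  then show "Xv k dvd f" using ve de by simp
qed

lemma Xv_prime: "Xv k dvd f * g \<Longrightarrow> Xv k dvd f \<or> Xv k dvd g"
  using Xv_dvd_iff[of k] by (simp add: subst_mult)

section \<open>Restriction to the first r variables\<close>

definition rho :: "nat \<Rightarrow> nat \<Rightarrow> ipoly" where
  "rho r = (\<lambda>l. if l < r then Xv l else 0)"

lemma monoev_rho: "monoev (rho r) m = (if Poly_Mapping.keys m \<subseteq> {..<r} then frag_of m else 0)"
proof (cases "Poly_Mapping.keys m \<subseteq> {..<r}")
  case True
  have "monoev (rho r) m = monoev Xv m"
    unfolding monoev_def by (rule prod.cong) (use True in \<open>auto simp: rho_def\<close>)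
  then show ?thesis using True mono_X[of m] by simp
next
  case False
  then obtain l where l: "l \<in> Poly_Mapping.keys m" "\<not> l < r" by auto
  then have "Poly_Mapping.lookup m l \<noteq> 0" by (simp add: in_keys_iff)
  then show ?thesis using False l unfolding monoev_def
    by (auto simp: rho_def prod_zero_iff intro!: bexI[of _ l])
qed

lemma HBT_iff: "p \<in> HBT r \<longleftrightarrow> subst (rho r) p = p"
proof
  assume "p \<in> HBT r"
  then have "Poly_Mapping.keys p \<subseteq> {m. Poly_Mapping.keys m \<subseteq> {..<r}}" by (auto simp: HBT_def)
  then show "subst (rho r) p = p"
    by (induction p rule: frag_induction) (simp_all add: monoev_rho subst_diff)
next
  assume eq: "subst (rho r) p = p"
  have "Poly_Mapping.keys (subst (rho r) p) \<subseteq> {m. Poly_Mapping.keys m \<subseteq> {..<r}}"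
    unfolding subst_def
    by (rule order_trans[OF keys_frag_extend]) (auto simp: monoev_rho split: if_splits)
  then show "p \<in> HBT r" using eq by (auto simp: HBT_def)
qed

lemma rho_in_HBT: "subst (rho r) p \<in> HBT r"
proof -
  have "Poly_Mapping.keys (subst (rho r) p) \<subseteq> {m. Poly_Mapping.keys m \<subseteq> {..<r}}"
    unfolding subst_def
    by (rule order_trans[OF keys_frag_extend]) (auto simp: monoev_rho split: if_splits)
  then show ?thesis by (auto simp: HBT_def)
qed

lemma HBT_mult: "p \<in> HBT r \<Longrightarrow> q \<in> HBT r \<Longrightarrow> p * q \<in> HBT r"
  by (simp add: HBT_iff subst_mult)
lemma HBT_one: "1 \<in> HBT r"
  by (simp add: HBT_iff)
lemma HBT_zero: "0 \<in> HBT r"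
  by (simp add: HBT_iff)
lemma HBT_minus: "p \<in> HBT r \<Longrightarrow> - p \<in> HBT r"
  by (simp add: HBT_iff subst_minus)
lemma HBT_prod: "(\<And>x. x \<in> S \<Longrightarrow> f x \<in> HBT r) \<Longrightarrow> (\<Prod>x\<in>S. f x) \<in> HBT r"
  by (induction S rule: infinite_finite_induct) (simp_all add: HBT_one HBT_mult)

lemma HBT_quot:
  assumes "f \<in> HBT r" "t \<in> HBT r" "f = c * t"
  shows "\<exists>c'\<in>HBT r. f = c' * t"
proof -
  have "subst (rho r) f = subst (rho r) c * subst (rho r) t" using assms(3) by (simp add: subst_mult)
  then show ?thesis using assms rho_in_HBT by (metis HBT_iff)
qed



lemma pm_not_less_zero: "\<not> (m :: nat \<Rightarrow>\<^sub>0 nat) < 0"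
  by transfer (simp add: less_fun_def)

lemma pm_le_zero: "(m :: nat \<Rightarrow>\<^sub>0 nat) \<le> 0 \<Longrightarrow> m = 0"
  using pm_not_less_zero[of m] by (simp add: order.order_iff_strict)

lemma pm_add_eq_zero: "(a :: nat \<Rightarrow>\<^sub>0 nat) + b = 0 \<Longrightarrow> a = 0"
  by (metis add_is_0 lookup_add lookup_zero poly_mapping_eqI)

lemma poly_expand: "(p::ipoly) = (\<Sum>a\<in>Poly_Mapping.keys p. Poly_Mapping.single a (Poly_Mapping.lookup p a))"
proof (rule poly_mapping_eqI)
  fix k
  have "(\<Sum>a\<in>Poly_Mapping.keys p. Poly_Mapping.lookup (Poly_Mapping.single a (Poly_Mapping.lookup p a)) k)
     = (\<Sum>a\<in>Poly_Mapping.keys p. if a = k then Poly_Mapping.lookup p k else 0)"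
    by (rule sum.cong) (auto simp: lookup_single when_def)
  also have "\<dots> = Poly_Mapping.lookup p k" by (simp add: in_keys_iff)
  finally show "Poly_Mapping.lookup p k = Poly_Mapping.lookup (\<Sum>a\<in>Poly_Mapping.keys p. Poly_Mapping.single a (Poly_Mapping.lookup p a)) k"
    by (simp add: lookup_sum)
qed

lemma lookup_mult_fin:
  "Poly_Mapping.lookup ((f::ipoly) * g) k =
    (\<Sum>a\<in>Poly_Mapping.keys f. \<Sum>b\<in>Poly_Mapping.keys g.
        if a + b = k then Poly_Mapping.lookup f a * Poly_Mapping.lookup g b else 0)"
proof -
  have "f * g = (\<Sum>a\<in>Poly_Mapping.keys f. Poly_Mapping.single a (Poly_Mapping.lookup f a)) *
                (\<Sum>b\<in>Poly_Mapping.keys g. Poly_Mapping.single b (Poly_Mapping.lookup g b))"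
    using poly_expand[of f] poly_expand[of g] by simp
  also have "\<dots> = (\<Sum>a\<in>Poly_Mapping.keys f. \<Sum>b\<in>Poly_Mapping.keys g.
      Poly_Mapping.single (a + b) (Poly_Mapping.lookup f a * Poly_Mapping.lookup g b))"
    by (simp add: sum_distrib_left sum_distrib_right mult_single, subst sum.swap, rule refl)
  finally show ?thesis
    by (simp add: lookup_sum lookup_single when_def)
qed

lemma max_key_mult:
  assumes "(f::ipoly) \<noteq> 0" "g \<noteq> 0"
  defines "Mf \<equiv> Max (Poly_Mapping.keys f)" and "Mg \<equiv> Max (Poly_Mapping.keys g)"
  shows "Poly_Mapping.lookup (f * g) (Mf + Mg) = Poly_Mapping.lookup f Mf * Poly_Mapping.lookup g Mg"
    and "Mf \<in> Poly_Mapping.keys f" "Mg \<in> Poly_Mapping.keys g"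
    and "Mf + Mg \<in> Poly_Mapping.keys (f * g)"
proof -
  have nf: "Poly_Mapping.keys f \<noteq> {}" "Poly_Mapping.keys g \<noteq> {}" using assms by auto
  show kf: "Mf \<in> Poly_Mapping.keys f" and kg: "Mg \<in> Poly_Mapping.keys g"
    using nf by (simp_all add: Mf_def Mg_def)
  have le: "a \<le> Mf" if "a \<in> Poly_Mapping.keys f" for a using that by (simp add: Mf_def)
  have le2: "b \<le> Mg" if "b \<in> Poly_Mapping.keys g" for b using that by (simp add: Mg_def)
  have eq: "a = Mf \<and> b = Mg" if "a \<in> Poly_Mapping.keys f" "b \<in> Poly_Mapping.keys g" "a + b = Mf + Mg" for a b
  proof -
    have "a \<le> Mf" "b \<le> Mg" using le le2 that by auto
    moreover have "\<not> a < Mf" using \<open>b \<le> Mg\<close> that(3) add_less_le_mono by fastforce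
    moreover have "\<not> b < Mg" using \<open>a \<le> Mf\<close> that(3) add_le_less_mono by fastforce
    ultimately show ?thesis by auto
  qed
  have "Poly_Mapping.lookup (f * g) (Mf + Mg) =
    (\<Sum>a\<in>Poly_Mapping.keys f. \<Sum>b\<in>Poly_Mapping.keys g.
        if a = Mf \<and> b = Mg then Poly_Mapping.lookup f a * Poly_Mapping.lookup g b else 0)"
    unfolding lookup_mult_fin
    by (rule sum.cong[OF refl], rule sum.cong[OF refl]) (use eq in auto)
  also have "\<dots> = (\<Sum>a\<in>Poly_Mapping.keys f. if a = Mf then Poly_Mapping.lookup f a * Poly_Mapping.lookup g Mg else 0)"
    by (rule sum.cong[OF refl]) (use kg in \<open>simp add: if_distrib sum.delta' cong: if_cong\<close>)
  also have "\<dots> = Poly_Mapping.lookup f Mf * Poly_Mapping.lookup g Mg"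
    using kf by (simp add: sum.delta')
  finally show 1: "Poly_Mapping.lookup (f * g) (Mf + Mg) = Poly_Mapping.lookup f Mf * Poly_Mapping.lookup g Mg" .
  show "Mf + Mg \<in> Poly_Mapping.keys (f * g)"
    using 1 kf kg by (simp add: in_keys_iff)
qed

lemma const_of_max0:
  assumes "(a::ipoly) \<noteq> 0" "Max (Poly_Mapping.keys a) = 0"
  shows "a = Poly_Mapping.single 0 (Poly_Mapping.lookup a 0)"
proof -
  have "\<forall>k\<in>Poly_Mapping.keys a. k = 0"
  proof
    fix k assume "k \<in> Poly_Mapping.keys a"
    then have "k \<le> Max (Poly_Mapping.keys a)" by simp
    then show "k = 0" using assms(2) pm_le_zero by simp
  qed
  then show ?thesis
    by (intro poly_mapping_eqI) (auto simp: lookup_single when_def in_keys_iff)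
qed

lemma unit_pm:
  assumes "(a::ipoly) * b = 1"
  shows "a = 1 \<or> a = -1"
proof -
  have nz: "a \<noteq> 0" "b \<noteq> 0" using assms by auto
  have "Max (Poly_Mapping.keys a) + Max (Poly_Mapping.keys b) \<in> Poly_Mapping.keys (a * b)"
    using max_key_mult(4)[OF nz] .
  then have s: "Max (Poly_Mapping.keys a) + Max (Poly_Mapping.keys b) = 0" using assms by simp
  then have ma: "Max (Poly_Mapping.keys a) = 0" by (rule pm_add_eq_zero)
  from s have mb: "Max (Poly_Mapping.keys b) = 0" by (metis add.commute pm_add_eq_zero)
  have ea: "a = Poly_Mapping.single 0 (Poly_Mapping.lookup a 0)" using const_of_max0[OF nz(1) ma] .
  have eb: "b = Poly_Mapping.single 0 (Poly_Mapping.lookup b 0)" using const_of_max0[OF nz(2) mb] .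
  obtain x y where xa: "a = Poly_Mapping.single 0 x" and yb: "b = Poly_Mapping.single 0 y"
    using ea eb by blast
  have "Poly_Mapping.single (0 + 0) (x * y) = (1::ipoly)"
    using assms unfolding xa yb by (simp only: mult_single)
  then have "Poly_Mapping.lookup (Poly_Mapping.single (0::nat\<Rightarrow>\<^sub>0nat) (x * y)) 0 = Poly_Mapping.lookup (1::ipoly) 0"
    by simp
  then have "x * y = 1"
    by (simp only: lookup_single_eq lookup_one_zero)
  then have "x = 1 \<or> x = -1"
    using zmult_eq_1_iff by blast
  then show ?thesis
  proof
    assume "x = 1" then show ?thesis using xa by simp
  next
    assume "x = -1" then have "a = Poly_Mapping.single 0 (- 1)" using xa by simp
    then show ?thesis by (simp add: single_uminus)
  qed
qed



declare One_nat_def [simp del]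

lemma single1_inj [simp]: "Poly_Mapping.single l (1::nat) = Poly_Mapping.single i 1 \<longleftrightarrow> l = i"
  by (metis lookup_single_eq lookup_single_not_eq zero_neq_one)

lemma subst_Xv [simp]: "subst \<sigma> (Xv l) = \<sigma> l"
  by (simp add: monoev_def)

definition linf :: "ipoly \<Rightarrow> bool" where
  "linf a \<longleftrightarrow> (\<forall>m\<in>Poly_Mapping.keys a. \<exists>j. m = Poly_Mapping.single j 1)"

definition cdp :: "ipoly \<Rightarrow> bool" where
  "cdp a \<longleftrightarrow> (\<forall>d::int. (\<forall>m. d dvd Poly_Mapping.lookup a m) \<longrightarrow> is_unit d)"

definition nrm :: "ipoly \<Rightarrow> nat" where
  "nrm a = (\<Sum>m\<in>Poly_Mapping.keys a. nat \<bar>Poly_Mapping.lookup a m\<bar>)"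

definition esub :: "nat \<Rightarrow> nat \<Rightarrow> int \<Rightarrow> nat \<Rightarrow> ipoly" where
  "esub i j q = (\<lambda>l. if l = i then Xv i + frag_cmul q (Xv j) else Xv l)"

lemma esub_inv:
  assumes "i \<noteq> j"
  shows "subst (esub i j (-q)) (subst (esub i j q) p) = p"
proof -
  have "(\<lambda>l. subst (esub i j (-q)) (esub i j q l)) = Xv"
  proof
    fix l
    have "frag_cmul (-q) (Xv j) + frag_cmul q (Xv j) = 0"
      by (simp add: frag_cmul_distrib[symmetric])
    then show "subst (esub i j (-q)) (esub i j q l) = Xv l"
      using assms by (simp add: esub_def subst_add subst_cmul add.assoc)
  qed
  then show ?thesis by (simp add: subst_subst subst_X)
qed

lemma frag_extend_plus_fun:
  "frag_extend (\<lambda>m. g1 m + g2 m) c = frag_extend g1 c + frag_extend g2 c"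
  by (simp add: frag_extend_def sum.distrib frag_cmul_distrib2)

lemma frag_extend_delta:
  "frag_extend (\<lambda>m. if m = s then v else 0) c = frag_cmul (Poly_Mapping.lookup c s) v"
proof -
  have "frag_extend (\<lambda>m. if m = s then v else 0) c =
     (\<Sum>m\<in>Poly_Mapping.keys c. if m = s then frag_cmul (Poly_Mapping.lookup c s) v else 0)"
    unfolding frag_extend_def by (rule sum.cong) auto
  also have "\<dots> = frag_cmul (Poly_Mapping.lookup c s) v"
    by (simp add: sum.delta' in_keys_iff)
  finally show ?thesis .
qed

lemma esub_lin:
  assumes "linf a"
  shows "subst (esub i j q) a = a + frag_cmul (q * Poly_Mapping.lookup a (Poly_Mapping.single i 1)) (Xv j)"
proof -
  let ?g = "\<lambda>m. frag_of m + (if m = Poly_Mapping.single i 1 then frag_cmul q (Xv j) else 0)"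
  have "subst (esub i j q) a = frag_extend ?g a"
    unfolding subst_def
  proof (rule frag_extend_eq)
    fix m assume "m \<in> Poly_Mapping.keys a"
    then obtain l where l: "m = Poly_Mapping.single l 1" using assms by (auto simp: linf_def)
    have "monoev (esub i j q) (Poly_Mapping.single l 1) = esub i j q l" by (rule mono_single1)
    then show "monoev (esub i j q) m = ?g m"
      using l by (auto simp: esub_def)
  qed
  also have "\<dots> = a + frag_cmul (Poly_Mapping.lookup a (Poly_Mapping.single i 1)) (frag_cmul q (Xv j))"
    by (simp only: frag_extend_plus_fun frag_extend_delta frag_expansion[symmetric])
  finally show ?thesis by (simp add: mult.commute)
qed

lemma cdp_zero: "\<not> cdp 0"
  by (auto simp: cdp_def intro!: exI[of _ 0])

lemma lin_single:
  assumes "linf a" "cdp a" "Poly_Mapping.keys a = {m}"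
  shows "\<exists>k u. u * u = (1::ipoly) \<and> a = u * Xv k"
proof -
  obtain k where m: "m = Poly_Mapping.single k 1" using assms by (auto simp: linf_def)
  let ?c = "Poly_Mapping.lookup a m"
  have a: "a = Poly_Mapping.single m ?c"
    by (rule poly_mapping_eqI) (use assms(3) in \<open>auto simp: lookup_single when_def in_keys_iff\<close>)
  have "\<forall>m'. ?c dvd Poly_Mapping.lookup a m'"
    by (subst a) (simp add: lookup_single when_def)
  then have "is_unit ?c" using assms(2) by (auto simp: cdp_def)
  then have c: "?c = 1 \<or> ?c = -1" by (auto simp: zdvd1_eq abs_if split: if_splits)
  then show ?thesis
  proof
    assume "?c = 1" then show ?thesis using a m by (intro exI[of _ k] exI[of _ 1]) simp
  next
    assume "?c = -1"
    then have "a = - Xv k" using a m by (simp add: single_uminus)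
    then show ?thesis by (intro exI[of _ k] exI[of _ "-1"]) simp
  qed
qed

lemma lin_prime:
  assumes "linf a" "cdp a" "a dvd f * g"
  shows "a dvd f \<or> a dvd g"
  using assms
proof (induction "nrm a" arbitrary: a f g rule: less_induct)
  case less
  show ?case
  proof (cases "card (Poly_Mapping.keys a) \<ge> 2")
    case False
    then have "card (Poly_Mapping.keys a) = 0 \<or> card (Poly_Mapping.keys a) = 1" by linarith
    then show ?thesis
    proof
      assume "card (Poly_Mapping.keys a) = 0"
      then have "a = 0" by simp
      then show ?thesis using less.prems cdp_zero by simp
    next
      assume "card (Poly_Mapping.keys a) = 1"
      then obtain m where "Poly_Mapping.keys a = {m}" by (rule card_1_singletonE)
      then obtain k u where u: "u * u = (1::ipoly)" "a = u * Xv k"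
        using lin_single less.prems by blast
      have dv: "a dvd x \<longleftrightarrow> Xv k dvd x" for x
      proof
        assume "a dvd x" then show "Xv k dvd x" using u by (metis dvd_mult_right)
      next
        assume "Xv k dvd x"
        then obtain h where "x = Xv k * h" by (auto simp: dvd_def)
        moreover have "a * (u * h) = (u * u) * (Xv k * h)" using u(2) by (simp add: ac_simps)
        moreover have "(u * u) * (Xv k * h) = Xv k * h" using u(1) by (simp only: mult_1_left)
        ultimately have "x = a * (u * h)" by metis
        then show "a dvd x" by simp
      qed
      show ?thesis using less.prems(3) dv Xv_prime by blast
    qed
  next
    case True
    then obtain m1 m2 where mm: "m1 \<in> Poly_Mapping.keys a" "m2 \<in> Poly_Mapping.keys a" "m1 \<noteq> m2"
      by (metis One_nat_def card_le_Suc0_iff_eq finite_keys not_less_eq_eq numeral_2_eq_2)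
    obtain i1 j1 where ij1: "m1 = Poly_Mapping.single i1 1" "m2 = Poly_Mapping.single j1 1"
      using mm less.prems(1) by (meson linf_def)
    have "\<exists>i j. i \<noteq> j \<and> Poly_Mapping.single i 1 \<in> Poly_Mapping.keys a \<and> Poly_Mapping.single j 1 \<in> Poly_Mapping.keys a
         \<and> \<bar>Poly_Mapping.lookup a (Poly_Mapping.single i 1)\<bar> \<le> \<bar>Poly_Mapping.lookup a (Poly_Mapping.single j 1)\<bar>"
    proof (cases "\<bar>Poly_Mapping.lookup a m1\<bar> \<le> \<bar>Poly_Mapping.lookup a m2\<bar>")
      case True then show ?thesis using mm ij1 by (intro exI[of _ i1] exI[of _ j1]) auto
    next
      case False then show ?thesis using mm ij1 by (intro exI[of _ j1] exI[of _ i1]) auto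
    qed
    then obtain i j where ij: "i \<noteq> j" "Poly_Mapping.single i 1 \<in> Poly_Mapping.keys a" "Poly_Mapping.single j 1 \<in> Poly_Mapping.keys a"
      "\<bar>Poly_Mapping.lookup a (Poly_Mapping.single i 1)\<bar> \<le> \<bar>Poly_Mapping.lookup a (Poly_Mapping.single j 1)\<bar>"
      by blast
    define si :: "nat \<Rightarrow>\<^sub>0 nat" where "si = Poly_Mapping.single i 1"
    define sj :: "nat \<Rightarrow>\<^sub>0 nat" where "sj = Poly_Mapping.single j 1"
    have sij: "si \<noteq> sj" using ij(1) by (simp add: si_def sj_def)
    define ai where "ai = Poly_Mapping.lookup a si"
    define aj where "aj = Poly_Mapping.lookup a sj"
    have ai0: "ai \<noteq> 0" and aj0: "aj \<noteq> 0" using ij by (auto simp: ai_def aj_def si_def sj_def in_keys_iff)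
    have aij: "\<bar>ai\<bar> \<le> \<bar>aj\<bar>" using ij by (simp add: ai_def aj_def si_def sj_def)
    define q :: int where "q = (if (ai > 0) = (aj > 0) then -1 else 1)"
    have qa: "\<bar>aj + q * ai\<bar> < \<bar>aj\<bar>"
      using ai0 aj0 aij unfolding q_def by (auto simp: abs_if split: if_splits)
    define a' where "a' = a + frag_cmul (q * ai) (Xv j)"
    have la': "Poly_Mapping.lookup a' m = Poly_Mapping.lookup a m + (if m = sj then q * ai else 0)" for m
      by (simp add: a'_def lookup_add sj_def)
    have ka': "Poly_Mapping.keys a' \<subseteq> Poly_Mapping.keys a"
    proof
      fix m assume "m \<in> Poly_Mapping.keys a'"
      then show "m \<in> Poly_Mapping.keys a"
        using la'[of m] ij(3) by (auto simp: in_keys_iff sj_def split: if_splits)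
    qed
    have lin': "linf a'" using ka' less.prems(1) by (auto simp: linf_def)
    have cdp': "cdp a'"
      unfolding cdp_def
    proof (intro allI impI)
      fix d :: int assume d: "\<forall>m. d dvd Poly_Mapping.lookup a' m"
      have "d dvd ai" using d[rule_format, of si] la'[of si] sij by (simp add: ai_def)
      moreover have "d dvd aj + q * ai" using d[rule_format, of sj] la'[of sj] by (simp add: aj_def)
      ultimately have "d dvd aj" by (metis dvd_add_left_iff dvd_mult)
      have "d dvd Poly_Mapping.lookup a m" for m
      proof (cases "m = sj")
        case True then show ?thesis using \<open>d dvd aj\<close> by (simp add: aj_def)
      next
        case False then show ?thesis using d[rule_format, of m] la'[of m] by simp
      qed
      then show "is_unit d" using less.prems(2) by (auto simp: cdp_def)
    qed
    have nrm': "nrm a' < nrm a"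
    proof -
      have fin: "finite (Poly_Mapping.keys a)" by simp
      have sjk: "sj \<in> Poly_Mapping.keys a" using ij by (simp add: sj_def)
      have "nrm a' = (\<Sum>m\<in>Poly_Mapping.keys a. nat \<bar>Poly_Mapping.lookup a' m\<bar>)"
        unfolding nrm_def by (rule sum.mono_neutral_left) (use ka' in \<open>auto simp: in_keys_iff\<close>)
      also have "\<dots> = nat \<bar>Poly_Mapping.lookup a' sj\<bar> + (\<Sum>m\<in>Poly_Mapping.keys a - {sj}. nat \<bar>Poly_Mapping.lookup a' m\<bar>)"
        using sum.remove[OF fin sjk] by simp
      also have "\<dots> = nat \<bar>aj + q * ai\<bar> + (\<Sum>m\<in>Poly_Mapping.keys a - {sj}. nat \<bar>Poly_Mapping.lookup a m\<bar>)"
        using la' by (simp add: aj_def)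
      also have "\<dots> < nat \<bar>aj\<bar> + (\<Sum>m\<in>Poly_Mapping.keys a - {sj}. nat \<bar>Poly_Mapping.lookup a m\<bar>)"
        using qa by simp
      also have "\<dots> = nrm a"
        unfolding nrm_def using sum.remove[OF fin sjk, of "\<lambda>m. nat \<bar>Poly_Mapping.lookup a m\<bar>"] by (simp add: aj_def)
      finally show ?thesis .
    qed
    let ?E = "subst (esub i j q)"
    let ?E' = "subst (esub i j (-q))"
    have Ea: "?E a = a'" using esub_lin[OF less.prems(1)] by (simp add: a'_def ai_def si_def)
    obtain h where h: "f * g = a * h" using less.prems(3) by (auto simp: dvd_def)
    have "?E f * ?E g = a' * ?E h" using h Ea by (metis subst_mult)
    then have "a' dvd ?E f * ?E g" by simp
    then have "a' dvd ?E f \<or> a' dvd ?E g" using less.hyps[OF nrm' lin' cdp'] by blast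
    moreover have "a' dvd ?E x \<Longrightarrow> a dvd x" for x
    proof -
      assume "a' dvd ?E x"
      then obtain k where "?E x = a' * k" by (auto simp: dvd_def)
      then have "?E' (?E x) = ?E' a' * ?E' k" by (simp add: subst_mult)
      moreover have "?E' (?E x) = x" by (rule esub_inv[OF ij(1)])
      moreover have "?E' a' = a" using esub_inv[OF ij(1), of q a] Ea by simp
      ultimately have "x = a * ?E' k" by simp
      then show "a dvd x" by simp
    qed
    ultimately show ?thesis by blast
  qed
qed



lemma HBT2_lin:
  assumes "a \<in> HBT2 r" shows "linf a"
  unfolding linf_def
proof
  fix m assume mk: "m \<in> Poly_Mapping.keys a"
  then have s: "(\<Sum>j\<in>Poly_Mapping.keys m. Poly_Mapping.lookup m j) = 1"
    using assms by (auto simp: HBT2_def)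
  then have "Poly_Mapping.keys m \<noteq> {}" by auto
  then obtain j where j: "j \<in> Poly_Mapping.keys m" by blast
  have fin: "finite (Poly_Mapping.keys m)" by simp
  have s2: "Poly_Mapping.lookup m j + (\<Sum>l\<in>Poly_Mapping.keys m - {j}. Poly_Mapping.lookup m l) = 1"
    using s sum.remove[OF fin j, of "Poly_Mapping.lookup m"] by simp
  have pos: "Poly_Mapping.lookup m j \<ge> 1" using j by (simp add: in_keys_iff)
  have rest: "Poly_Mapping.keys m - {j} = {}"
  proof (rule ccontr)
    assume "Poly_Mapping.keys m - {j} \<noteq> {}"
    then obtain l where l: "l \<in> Poly_Mapping.keys m - {j}" by auto
    have "Poly_Mapping.lookup m l \<le> (\<Sum>l\<in>Poly_Mapping.keys m - {j}. Poly_Mapping.lookup m l)"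
      using l by (intro member_le_sum) auto
    moreover have "Poly_Mapping.lookup m l \<ge> 1" using l by (simp add: in_keys_iff)
    ultimately show False using s2 pos by linarith
  qed
  have "Poly_Mapping.lookup m j = 1" using s2 rest by simp
  then have "m = Poly_Mapping.single j 1"
    by (intro poly_mapping_eqI) (use rest in \<open>auto simp: lookup_single when_def in_keys_iff\<close>)
  then show "\<exists>j. m = Poly_Mapping.single j 1" by blast
qed

lemma gcd_cdp: "coeff_gcd_one a \<Longrightarrow> cdp a"
  unfolding cdp_def coeff_gcd_one_def
proof (intro allI impI)
  fix d :: int
  assume g: "Gcd (Poly_Mapping.lookup a ` Poly_Mapping.keys a) = 1"
    and d: "\<forall>m. d dvd Poly_Mapping.lookup a m"
  have "d dvd Gcd (Poly_Mapping.lookup a ` Poly_Mapping.keys a)"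
    by (rule Gcd_greatest) (use d in auto)
  then show "is_unit d" using g by simp
qed

lemma gcd_nz: "coeff_gcd_one a \<Longrightarrow> a \<noteq> 0"
  by (auto simp: coeff_gcd_one_def)

lemma lin_nodiv:
  assumes "linf a" "linf b" "a \<noteq> 0" "b \<noteq> 0" "a dvd b"
  shows "\<exists>c::int. b = of_int c * a"
proof -
  obtain h where h: "b = a * h" using assms(5) by (auto simp: dvd_def)
  have h0: "h \<noteq> 0" using h assms(4) by auto
  define Ma where "Ma = Max (Poly_Mapping.keys a)"
  define Mh where "Mh = Max (Poly_Mapping.keys h)"
  have k1: "Ma \<in> Poly_Mapping.keys a" and k2: "Ma + Mh \<in> Poly_Mapping.keys b"
    using max_key_mult[OF assms(3) h0] h by (simp_all add: Ma_def Mh_def)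
  obtain j where j: "Ma = Poly_Mapping.single j 1" using k1 assms(1) by (auto simp: linf_def)
  obtain j' where j': "Ma + Mh = Poly_Mapping.single j' 1" using k2 assms(2) by (auto simp: linf_def)
  have "Poly_Mapping.lookup (Ma + Mh) j = 1 + Poly_Mapping.lookup Mh j"
    using j by (simp add: lookup_add)
  then have "1 + Poly_Mapping.lookup Mh j = (if j' = j then 1 else 0)"
    using j' by (simp add: lookup_single when_def)
  then have "j' = j" by (auto split: if_splits)
  then have "Ma + Mh = Ma + 0" using j j' by simp
  then have Mh0: "Mh = 0" by (rule add_left_imp_eq)
  have "h = Poly_Mapping.single 0 (Poly_Mapping.lookup h 0)"
    using const_of_max0[OF h0] Mh0 by (simp add: Mh_def)
  then have "h = of_int (Poly_Mapping.lookup h 0)"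
    by (metis single_of_int of_int_eq_id id_apply)
  then show ?thesis using h by (metis mult.commute)
qed

lemma lin_not_unit:
  assumes "linf a" shows "\<not> a dvd 1"
proof
  assume "a dvd 1"
  then obtain b where "1 = a * b" by (auto simp: dvd_def)
  then have "a = 1 \<or> a = -1" using unit_pm by metis
  then have "0 \<in> Poly_Mapping.keys a" by auto
  then obtain j where "(0::nat \<Rightarrow>\<^sub>0 nat) = Poly_Mapping.single j 1" using assms by (auto simp: linf_def)
  then have "Poly_Mapping.lookup (0::nat \<Rightarrow>\<^sub>0 nat) j = 1" by (metis lookup_single_eq)
  then show False by simp
qed

lemma lin_prime_prod:
  assumes "linf a" "cdp a" "finite S" "a dvd (\<Prod>e\<in>S. b e)"
  shows "\<exists>e\<in>S. a dvd b e"
  using assms(3,4)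
proof (induction S rule: finite_induct)
  case empty then show ?case using lin_not_unit[OF assms(1)] by simp
next
  case (insert x F)
  then have "a dvd b x * (\<Prod>e\<in>F. b e)" by simp
  then have "a dvd b x \<or> a dvd (\<Prod>e\<in>F. b e)" using lin_prime[OF assms(1,2)] by blast
  then show ?case using insert by blast
qed

lemma prod_dvd:
  assumes "finite S"
    and "\<forall>e\<in>S. linf (b e) \<and> cdp (b e) \<and> b e \<noteq> 0"
    and "\<forall>e\<in>S. \<forall>e'\<in>S. e \<noteq> e' \<longrightarrow> Z_lin_indep (b e) (b e')"
    and "\<forall>e\<in>S. b e dvd x"
  shows "(\<Prod>e\<in>S. b e) dvd x"
  using assms
proof (induction S rule: finite_induct)
  case empty then show ?case by simp
next
  case (insert e F)
  have IH: "(\<Prod>e\<in>F. b e) dvd x" using insert by blast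
  then obtain y where y: "x = (\<Prod>e\<in>F. b e) * y" by (auto simp: dvd_def)
  have be: "linf (b e)" "cdp (b e)" "b e \<noteq> 0" using insert.prems by auto
  have "b e dvd (\<Prod>e\<in>F. b e) * y" using insert.prems y by auto
  then have "b e dvd (\<Prod>e\<in>F. b e) \<or> b e dvd y" using lin_prime[OF be(1,2)] by blast
  then show ?case
  proof
    assume "b e dvd (\<Prod>e\<in>F. b e)"
    then obtain e' where e': "e' \<in> F" "b e dvd b e'" using lin_prime_prod[OF be(1,2) insert.hyps(1)] by blast
    then have "e \<noteq> e'" using insert.hyps(2) by auto
    obtain c where c: "b e' = of_int c * b e"
      using lin_nodiv[OF be(1) _ be(3) _ e'(2)] insert.prems e' by auto
    have "of_int c * b e + of_int (-1) * b e' = 0" using c by simp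
    then have "(-1::int) = 0" using insert.prems e' \<open>e \<noteq> e'\<close> unfolding Z_lin_indep_def by blast
    then show ?thesis by simp
  next
    assume "b e dvd y"
    then obtain z where "y = b e * z" by (auto simp: dvd_def)
    then have "x = (\<Prod>e\<in>insert e F. b e) * z" using y insert.hyps by (simp add: ac_simps)
    then show ?thesis by simp
  qed
qed



definition Tp :: "'e set \<Rightarrow> ('e \<Rightarrow> 'v) \<Rightarrow> ('e \<Rightarrow> ipoly) \<Rightarrow> 'v \<Rightarrow> ipoly" where
  "Tp E i \<alpha> p = (\<Prod>e\<in>out_edges E i p. \<alpha> e)"

lemma thom_eq: "thom_class E i \<alpha> p q = (if q = p then Tp E i \<alpha> p else 0)"
  by (simp add: thom_class_def Tp_def)

lemma GKM_facts:
  assumes "abstract_GKM_graph r n V E i t rv \<alpha>"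
  shows "finite V" "finite E"
    "\<And>e. e \<in> E \<Longrightarrow> i e \<in> V \<and> t e \<in> V \<and> i e \<noteq> t e \<and> rv e \<in> E \<and> i (rv e) = t e"
    "\<And>e. e \<in> E \<Longrightarrow> \<alpha> e \<in> HBT2 r \<and> coeff_gcd_one (\<alpha> e) \<and> (\<alpha> (rv e) = \<alpha> e \<or> \<alpha> (rv e) = - \<alpha> e)"
    "\<And>e e'. e \<in> E \<Longrightarrow> e' \<in> E \<Longrightarrow> e \<noteq> e' \<Longrightarrow> i e = i e' \<Longrightarrow> Z_lin_indep (\<alpha> e) (\<alpha> e')"
proof -
  have N: "nvalent_graph n V E i t rv" and A: "axial_function r V E i rv \<alpha>"
    using assms by (simp_all add: abstract_GKM_graph_def)
  show "finite V" "finite E" using N by (simp_all add: nvalent_graph_def)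
  show "\<And>e. e \<in> E \<Longrightarrow> i e \<in> V \<and> t e \<in> V \<and> i e \<noteq> t e \<and> rv e \<in> E \<and> i (rv e) = t e"
    using N unfolding nvalent_graph_def by blast
  show "\<And>e. e \<in> E \<Longrightarrow> \<alpha> e \<in> HBT2 r \<and> coeff_gcd_one (\<alpha> e) \<and> (\<alpha> (rv e) = \<alpha> e \<or> \<alpha> (rv e) = - \<alpha> e)"
    using A unfolding axial_function_def by blast
  show "\<And>e e'. e \<in> E \<Longrightarrow> e' \<in> E \<Longrightarrow> e \<noteq> e' \<Longrightarrow> i e = i e' \<Longrightarrow> Z_lin_indep (\<alpha> e) (\<alpha> e')"
    using A unfolding axial_function_def by blast
qed

lemma out_edges_sub: "out_edges E i p \<subseteq> E"
  by (auto simp: out_edges_def)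

lemma HBT2_HBT: "a \<in> HBT2 r \<Longrightarrow> a \<in> HBT r"
  by (simp add: HBT2_def)

lemma Tp_nz:
  assumes "abstract_GKM_graph r n V E i t rv \<alpha>"
  shows "Tp E i \<alpha> p \<noteq> 0"
proof -
  have fin: "finite (out_edges E i p)" by (rule finite_subset[OF out_edges_sub GKM_facts(2)[OF assms]])
  have "\<forall>e\<in>out_edges E i p. \<alpha> e \<noteq> 0"
  proof
    fix e assume "e \<in> out_edges E i p"
    then have "e \<in> E" by (simp add: out_edges_def)
    then show "\<alpha> e \<noteq> 0" using GKM_facts(4)[OF assms] gcd_nz by blast
  qed
  then show ?thesis using fin by (simp add: Tp_def prod_zero_iff)
qed

lemma Tp_HBT:
  assumes "abstract_GKM_graph r n V E i t rv \<alpha>"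
  shows "Tp E i \<alpha> p \<in> HBT r"
  unfolding Tp_def
proof (rule HBT_prod)
  fix e assume "e \<in> out_edges E i p"
  then have "e \<in> E" by (simp add: out_edges_def)
  then show "\<alpha> e \<in> HBT r" using GKM_facts(4)[OF assms] HBT2_HBT by blast
qed

lemma thom_gc:
  assumes G: "abstract_GKM_graph r n V E i t rv \<alpha>" and p: "p \<in> V"
  shows "thom_class E i \<alpha> p \<in> graph_cohomology r V E i t \<alpha>"
  unfolding graph_cohomology_def
proof (intro CollectI conjI ballI allI impI)
  fix q assume "q \<in> V" then show "thom_class E i \<alpha> p q \<in> HBT r"
    using Tp_HBT[OF G] HBT_zero by (simp add: thom_eq)
next
  fix q assume "q \<notin> V" then show "thom_class E i \<alpha> p q = 0" using p by (auto simp: thom_eq)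
next
  fix e assume e: "e \<in> E"
  have fin: "finite (out_edges E i p)" by (rule finite_subset[OF out_edges_sub GKM_facts(2)[OF G]])
  note ed = GKM_facts(3)[OF G e]
  show "\<alpha> e dvd thom_class E i \<alpha> p (i e) - thom_class E i \<alpha> p (t e)"
  proof (cases "i e = p")
    case True
    then have "e \<in> out_edges E i p" using e by (simp add: out_edges_def)
    then have "\<alpha> e dvd Tp E i \<alpha> p" unfolding Tp_def by (rule dvd_prodI[OF fin])
    then show ?thesis using True ed by (simp add: thom_eq)
  next
    case False
    show ?thesis
    proof (cases "t e = p")
      case True
      then have "rv e \<in> out_edges E i p" using ed by (simp add: out_edges_def)
      then have d: "\<alpha> (rv e) dvd Tp E i \<alpha> p" unfolding Tp_def by (rule dvd_prodI[OF fin])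
      have "\<alpha> e dvd \<alpha> (rv e)" using GKM_facts(4)[OF G e] by auto
      then have "\<alpha> e dvd Tp E i \<alpha> p" using d by (rule dvd_trans)
      then show ?thesis using True False by (simp add: thom_eq)
    next
      case False
      then show ?thesis using \<open>i e \<noteq> p\<close> by (simp add: thom_eq)
    qed
  qed
qed

lemma Tp_dvd:
  assumes G: "abstract_GKM_graph r n V E i t rv \<alpha>" and p: "p \<in> V"
    and f: "f \<in> graph_cohomology r V E i t \<alpha>" and z: "\<forall>q. q \<noteq> p \<longrightarrow> f q = 0"
  shows "Tp E i \<alpha> p dvd f p"
  unfolding Tp_def
proof (rule prod_dvd)
  show "finite (out_edges E i p)" by (rule finite_subset[OF out_edges_sub GKM_facts(2)[OF G]])
  show "\<forall>e\<in>out_edges E i p. linf (\<alpha> e) \<and> cdp (\<alpha> e) \<and> \<alpha> e \<noteq> 0"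
  proof
    fix e assume "e \<in> out_edges E i p"
    then have "e \<in> E" by (simp add: out_edges_def)
    then have "\<alpha> e \<in> HBT2 r" "coeff_gcd_one (\<alpha> e)" using GKM_facts(4)[OF G] by auto
    then show "linf (\<alpha> e) \<and> cdp (\<alpha> e) \<and> \<alpha> e \<noteq> 0" using HBT2_lin gcd_cdp gcd_nz by blast
  qed
  show "\<forall>e\<in>out_edges E i p. \<forall>e'\<in>out_edges E i p. e \<noteq> e' \<longrightarrow> Z_lin_indep (\<alpha> e) (\<alpha> e')"
  proof (intro ballI impI)
    fix e e' assume "e \<in> out_edges E i p" "e' \<in> out_edges E i p" "e \<noteq> e'"
    then show "Z_lin_indep (\<alpha> e) (\<alpha> e')" using GKM_facts(5)[OF G, of e e'] by (simp add: out_edges_def)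
  qed
  show "\<forall>e\<in>out_edges E i p. \<alpha> e dvd f p"
  proof
    fix e assume e: "e \<in> out_edges E i p"
    then have eE: "e \<in> E" and ie: "i e = p" by (auto simp: out_edges_def)
    have "t e \<noteq> p" using GKM_facts(3)[OF G eE] ie by auto
    then have "f (t e) = 0" using z by auto
    moreover have "\<alpha> e dvd f (i e) - f (t e)" using f eE by (auto simp: graph_cohomology_def)
    ultimately show "\<alpha> e dvd f p" using ie by simp
  qed
qed

lemma partA:
  assumes G: "abstract_GKM_graph r n V E i t rv \<alpha>"
  shows "maximal_collection r V E i t \<alpha> (thom_class E i \<alpha> ` V)"
  unfolding maximal_collection_def
proof (intro conjI)
  have nz: "thom_class E i \<alpha> p \<noteq> (\<lambda>q. 0)" for p
  proof
    assume "thom_class E i \<alpha> p = (\<lambda>q. 0)"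
    then have "thom_class E i \<alpha> p p = 0" by simp
    then show False using Tp_nz[OF G] by (simp add: thom_eq)
  qed
  show "thom_class E i \<alpha> ` V \<subseteq> graph_cohomology r V E i t \<alpha> - {\<lambda>q. 0}"
    using thom_gc[OF G] nz by auto
  show "\<forall>f\<in>thom_class E i \<alpha> ` V. \<forall>g\<in>thom_class E i \<alpha> ` V. f \<noteq> g \<longrightarrow> (\<lambda>q. f q * g q) = (\<lambda>q. 0)"
    by (auto simp: thom_eq fun_eq_iff)
  show "finite (thom_class E i \<alpha> ` V)" using GKM_facts(1)[OF G] by simp
  have "inj_on (thom_class E i \<alpha>) V"
  proof (rule inj_onI)
    fix p p' assume "p \<in> V" "p' \<in> V" "thom_class E i \<alpha> p = thom_class E i \<alpha> p'"
    then have "thom_class E i \<alpha> p p = thom_class E i \<alpha> p' p" by simp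
    then show "p = p'" using Tp_nz[OF G] by (auto simp: thom_eq split: if_splits)
  qed
  then show "card (thom_class E i \<alpha> ` V) = card V" by (rule card_image)
qed

lemma partB:
  assumes G: "abstract_GKM_graph r n V E i t rv \<alpha>"
    and M: "maximal_collection r V E i t \<alpha> F"
  shows "\<exists>c. (\<forall>p\<in>V. c p \<in> HBT r) \<and> F = (\<lambda>p. (\<lambda>q. c p * thom_class E i \<alpha> p q)) ` V"
proof -
  have FG: "\<And>f. f \<in> F \<Longrightarrow> f \<in> graph_cohomology r V E i t \<alpha> \<and> f \<noteq> (\<lambda>q. 0)"
    and orth: "\<And>f g. f \<in> F \<Longrightarrow> g \<in> F \<Longrightarrow> f \<noteq> g \<Longrightarrow> (\<lambda>q. f q * g q) = (\<lambda>q. 0)"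
    and finF: "finite F" and cardF: "card F = card V"
    using M unfolding maximal_collection_def by auto
  have finV: "finite V" using GKM_facts(1)[OF G] .
  have zd: "f q = 0 \<or> g q = 0" if "f \<in> F" "g \<in> F" "f \<noteq> g" for f g q
  proof -
    have "f q * g q = 0" using fun_cong[OF orth[OF that], of q] by simp
    then show ?thesis by simp
  qed
  have outV: "f q = 0" if "f \<in> F" "q \<notin> V" for f q
    using FG[OF that(1)] that(2) by (auto simp: graph_cohomology_def)
  define s where "s f = (SOME q. f q \<noteq> 0)" for f :: "'a \<Rightarrow> ipoly"
  have s1: "f (s f) \<noteq> 0" if "f \<in> F" for f
  proof -
    have "\<exists>q. f q \<noteq> 0" using FG[OF that] by auto
    then show ?thesis unfolding s_def by (rule someI_ex)
  qed
  have s2: "s f \<in> V" if "f \<in> F" for f using s1[OF that] outV[OF that] by blast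
  have inj: "inj_on s F"
  proof (rule inj_onI)
    fix f g assume fg: "f \<in> F" "g \<in> F" "s f = s g"
    show "f = g"
    proof (rule ccontr)
      assume "f \<noteq> g"
      then have "f (s f) = 0 \<or> g (s f) = 0" using zd fg by blast
      then show False using s1[OF fg(1)] s1[OF fg(2)] fg(3) by auto
    qed
  qed
  have img: "s ` F = V"
  proof (rule card_subset_eq[OF finV])
    show "s ` F \<subseteq> V" using s2 by auto
    show "card (s ` F) = card V" using card_image[OF inj] cardF by simp
  qed
  have supp: "q = s f" if "f \<in> F" "f q \<noteq> 0" for f q
  proof -
    have "q \<in> V" using outV that by blast
    then obtain g where g: "g \<in> F" "q = s g" using img by blast
    show ?thesis
    proof (cases "g = f")
      case True then show ?thesis using g by simp
    next
      case False
      then have "f q = 0 \<or> g q = 0" using zd that(1) g(1) by blast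
      then show ?thesis using that s1 g by auto
    qed
  qed
  define fp where "fp p = inv_into F s p" for p
  have fpF: "fp p \<in> F" if "p \<in> V" for p using that img by (auto simp: fp_def intro: inv_into_into)
  have sfp: "s (fp p) = p" if "p \<in> V" for p unfolding fp_def using f_inv_into_f[of p s F] that img by simp
  have key: "\<exists>c\<in>HBT r. fp p = (\<lambda>q. c * thom_class E i \<alpha> p q)" if p: "p \<in> V" for p
  proof -
    let ?f = "fp p"
    have fF: "?f \<in> F" using fpF[OF p] .
    have z: "\<forall>q. q \<noteq> p \<longrightarrow> ?f q = 0" using supp[OF fF] sfp[OF p] by auto
    have gc: "?f \<in> graph_cohomology r V E i t \<alpha>" using FG[OF fF] by simp
    have "Tp E i \<alpha> p dvd ?f p" by (rule Tp_dvd[OF G p gc z])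
    then obtain c0 where c0: "?f p = c0 * Tp E i \<alpha> p" by (auto simp: dvd_def mult.commute)
    have "?f p \<in> HBT r" using gc p by (auto simp: graph_cohomology_def)
    then obtain c where c: "c \<in> HBT r" "?f p = c * Tp E i \<alpha> p"
      using HBT_quot[OF _ Tp_HBT[OF G] c0] by blast
    have "?f = (\<lambda>q. c * thom_class E i \<alpha> p q)"
    proof
      fix q show "?f q = c * thom_class E i \<alpha> p q"
        using c z by (cases "q = p") (auto simp: thom_eq)
    qed
    then show ?thesis using c by blast
  qed
  then have "\<forall>p\<in>V. \<exists>c. c \<in> HBT r \<and> fp p = (\<lambda>q. c * thom_class E i \<alpha> p q)" by blast
  from bchoice[OF this] obtain c where c: "\<forall>p\<in>V. c p \<in> HBT r \<and> fp p = (\<lambda>q. c p * thom_class E i \<alpha> p q)"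
    by blast
  have "F = (\<lambda>p. (\<lambda>q. c p * thom_class E i \<alpha> p q)) ` V"
  proof
    show "F \<subseteq> (\<lambda>p. (\<lambda>q. c p * thom_class E i \<alpha> p q)) ` V"
    proof
      fix f assume f: "f \<in> F"
      have "fp (s f) = f" unfolding fp_def using inv_into_f_f[OF inj f] .
      then have "f = (\<lambda>q. c (s f) * thom_class E i \<alpha> (s f) q)" using c s2[OF f] by simp
      then show "f \<in> (\<lambda>p. (\<lambda>q. c p * thom_class E i \<alpha> p q)) ` V"
        by (rule image_eqI) (rule s2[OF f])
    qed
    show "(\<lambda>p. (\<lambda>q. c p * thom_class E i \<alpha> p q)) ` V \<subseteq> F"
      using c fpF by auto
  qed
  then show ?thesis using c by blast
qed

theorem proposition3p3:
  fixes r n :: nat and V :: "'v set" and E :: "'e set"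
    and i t :: "'e \<Rightarrow> 'v" and rv :: "'e \<Rightarrow> 'e" and \<alpha> :: "'e \<Rightarrow> ipoly"
  assumes "abstract_GKM_graph r n V E i t rv \<alpha>"
  shows "maximal_collection r V E i t \<alpha> (thom_class E i \<alpha> ` V)
    \<and> (\<forall>F. maximal_collection r V E i t \<alpha> F \<longrightarrow>
           (\<exists>c. (\<forall>p\<in>V. c p \<in> HBT r) \<and> F = (\<lambda>p. (\<lambda>q. c p * thom_class E i \<alpha> p q)) ` V))
    \<and> (\<forall>G. maximal_collection r V E i t \<alpha> G \<longrightarrow>
           (\<forall>F. maximal_collection r V E i t \<alpha> F \<longrightarrow>
                (\<exists>c. (\<forall>g\<in>G. c g \<in> HBT r) \<and> F = (\<lambda>g. (\<lambda>q. c g * g q)) ` G)) \<longrightarrow>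
           (\<exists>\<sigma>. bij_betw \<sigma> V G \<and>
                (\<forall>p\<in>V. \<sigma> p = thom_class E i \<alpha> p \<or> \<sigma> p = (\<lambda>q. - thom_class E i \<alpha> p q))))"
proof (intro conjI allI impI)
  note GK = assms
  show "maximal_collection r V E i t \<alpha> (thom_class E i \<alpha> ` V)" by (rule partA[OF GK])
  fix F assume "maximal_collection r V E i t \<alpha> F"
  then show "\<exists>c. (\<forall>p\<in>V. c p \<in> HBT r) \<and> F = (\<lambda>p. (\<lambda>q. c p * thom_class E i \<alpha> p q)) ` V"
    by (rule partB[OF GK])
next
  fix G assume MG: "maximal_collection r V E i t \<alpha> G"
    and H: "\<forall>F. maximal_collection r V E i t \<alpha> F \<longrightarrow>
                (\<exists>c. (\<forall>g\<in>G. c g \<in> HBT r) \<and> F = (\<lambda>g. (\<lambda>q. c g * g q)) ` G)"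
  obtain d where d: "\<forall>p\<in>V. d p \<in> HBT r" and Gd: "G = (\<lambda>p. (\<lambda>q. d p * thom_class E i \<alpha> p q)) ` V"
    using partB[OF assms MG] by blast
  obtain c where Fc: "thom_class E i \<alpha> ` V = (\<lambda>g. (\<lambda>q. c g * g q)) ` G"
    using H partA[OF assms] by blast
  have du: "d p = 1 \<or> d p = -1" if p: "p \<in> V" for p
  proof -
    have "thom_class E i \<alpha> p \<in> (\<lambda>g. (\<lambda>q. c g * g q)) ` G" using Fc p by blast
    then obtain g where g: "g \<in> G" "thom_class E i \<alpha> p = (\<lambda>q. c g * g q)" by blast
    then obtain p' where p': "p' \<in> V" "g = (\<lambda>q. d p' * thom_class E i \<alpha> p' q)" using Gd by blast
    have e: "thom_class E i \<alpha> p p = c g * (d p' * thom_class E i \<alpha> p' p)"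
      using fun_cong[OF g(2), of p] p'(2) by simp
    have pp: "p' = p"
    proof (rule ccontr)
      assume "p' \<noteq> p"
      then have "Tp E i \<alpha> p = 0" using e by (simp add: thom_eq)
      then show False using Tp_nz[OF assms] by simp
    qed
    have "Tp E i \<alpha> p = (c g * d p) * Tp E i \<alpha> p" using e pp by (simp add: thom_eq mult.assoc)
    then have "(c g * d p) = 1" using Tp_nz[OF assms, of p] by simp
    then have "d p * c g = 1" by (simp add: mult.commute)
    then show ?thesis by (rule unit_pm)
  qed
  define \<sigma> where "\<sigma> p = (\<lambda>q. d p * thom_class E i \<alpha> p q)" for p
  show "\<exists>\<sigma>. bij_betw \<sigma> V G \<and> (\<forall>p\<in>V. \<sigma> p = thom_class E i \<alpha> p \<or> \<sigma> p = (\<lambda>q. - thom_class E i \<alpha> p q))"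
  proof (intro exI conjI ballI)
    show "bij_betw \<sigma> V G"
      unfolding bij_betw_def
    proof
      show "inj_on \<sigma> V"
      proof (rule inj_onI)
        fix p p' assume pp: "p \<in> V" "p' \<in> V" "\<sigma> p = \<sigma> p'"
        then have e: "d p * thom_class E i \<alpha> p p = d p' * thom_class E i \<alpha> p' p"
          using fun_cong[OF pp(3), of p] unfolding \<sigma>_def by simp
        show "p = p'"
        proof (rule ccontr)
          assume "p \<noteq> p'"
          then have "d p * Tp E i \<alpha> p = 0" using e by (simp add: thom_eq)
          moreover have "d p \<noteq> 0" using du[OF pp(1)] by auto
          ultimately show False using Tp_nz[OF assms, of p] by simp
        qed
      qed
      show "\<sigma> ` V = G" using Gd by (simp add: \<sigma>_def)
    qed
    fix p assume p: "p \<in> V"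
    show "\<sigma> p = thom_class E i \<alpha> p \<or> \<sigma> p = (\<lambda>q. - thom_class E i \<alpha> p q)"
      using du[OF p] by (auto simp: \<sigma>_def)
  qed
qed


end
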